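(* For every $0<r<1$, the set $\Sigma_r:=\{q\in B:\ d(q,\partial B)=1-r\}$ is a topological sphere.
   Context: The first Heisenberg group $\mathbb{H}^1$ is $\mathbb{R}^3$ with product $(x,y,t)\cdot(x',y',t')=(x+x',y+y',t+t'-2xy'+2yx')$, Korányi norm $\|(z,t)\|=(|z|^4+t^2)^{1/4}$ ($z=x+\mathrm{i}y$), distance $d(p,q)=\|q^{-1}\cdot p\|$, $d(q,A)=\inf_{a\in A}d(q,a)$, and $B=\{q:\|q\|<1\}$ is the Korányi unit ball. *)

theory Defs
  imports "HOL-Analysis.Analysis"
begin

text \<open>The first Heisenberg group, modelled on real \<times> real \<times> real (points (x,y,t)),
  carrying the standard Euclidean topology of R^3.\<close>

type_synonym heis = "real \<times> real \<times> real"

fun heis_mult :: "heis \<Rightarrow> heis \<Rightarrow> heis" where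
  "heis_mult (x, y, t) (x', y', t') = (x + x', y + y', t + t' - 2 * x * y' + 2 * y * x')"

fun heis_inv :: "heis \<Rightarrow> heis" where
  "heis_inv (x, y, t) = (- x, - y, - t)"

fun kor_norm :: "heis \<Rightarrow> real" where
  "kor_norm (x, y, t) = root 4 ((x\<^sup>2 + y\<^sup>2)\<^sup>2 + t\<^sup>2)"

definition kor_dist :: "heis \<Rightarrow> heis \<Rightarrow> real" where
  "kor_dist p q = kor_norm (heis_mult (heis_inv q) p)"

definition kor_setdist :: "heis \<Rightarrow> heis set \<Rightarrow> real" where
  "kor_setdist q A = (INF a\<in>A. kor_dist q a)"

definition kor_ball :: "heis set" where
  "kor_ball = {q. kor_norm q < 1}"

definition Sigma_r :: "real \<Rightarrow> heis set" where
  "Sigma_r r = {q \<in> kor_ball. kor_setdist q (frontier kor_ball) = 1 - r}"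

end

theory Submission
  imports Defs
begin

definition NN :: "heis \<Rightarrow> real" where
  "NN p = (fst p ^ 2 + fst (snd p) ^ 2) ^ 2 + snd (snd p) ^ 2"

lemma NN_nonneg: "NN p \<ge> 0" by (simp add: NN_def)

lemma kor_norm_NN: "kor_norm p = root 4 (NN p)"
  by (cases p) (simp add: NN_def)

lemma kor_norm_sqrt: "kor_norm p = sqrt (sqrt (NN p))"
proof -
  have "root 4 (NN p) = root 2 (root 2 (NN p))"
    using real_root_mult_exp[of 2 2 "NN p"] by simp
  thus ?thesis by (simp add: kor_norm_NN sqrt_def NN_nonneg)
qed

lemma kor_norm_nonneg: "kor_norm p \<ge> 0" by (simp add: kor_norm_sqrt NN_nonneg)

lemma kor_norm_less: "kor_norm p < kor_norm q \<longleftrightarrow> NN p < NN q"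
  by (simp add: kor_norm_NN)
lemma kor_norm_le: "kor_norm p \<le> kor_norm q \<longleftrightarrow> NN p \<le> NN q"
  by (simp add: kor_norm_NN NN_nonneg)
lemma kor_norm_eq1: "kor_norm p = 1 \<longleftrightarrow> NN p = 1"
  by (simp add: kor_norm_NN)
lemma kor_norm_less1: "kor_norm p < 1 \<longleftrightarrow> NN p < 1"
  by (simp add: kor_norm_NN)
lemma kor_norm_0: "kor_norm 0 = 0"
  by (simp add: kor_norm_NN NN_def)

lemma hm: "heis_mult p q = (fst p + fst q, fst (snd p) + fst (snd q),
   snd (snd p) + snd (snd q) - 2 * fst p * fst (snd q) + 2 * fst (snd p) * fst q)"
  by (cases p; cases q) auto

lemma hi: "heis_inv p = - p"
  by (cases p) auto

lemma heis_assoc: "heis_mult (heis_mult p q) s = heis_mult p (heis_mult q s)"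
  by (simp add: hm algebra_simps)

lemma heis_inv_left: "heis_mult (heis_inv p) (heis_mult p q) = q"
  by (simp add: hm hi algebra_simps prod_eq_iff)

lemma heis_inv_right: "heis_mult p (heis_mult (heis_inv p) q) = q"
  by (simp add: hm hi algebra_simps prod_eq_iff)

lemma heis_inv_mult: "heis_inv (heis_mult p q) = heis_mult (heis_inv q) (heis_inv p)"
  by (simp add: hm hi algebra_simps prod_eq_iff)

lemma kor_norm_inv: "kor_norm (heis_inv p) = kor_norm p"
  by (simp add: kor_norm_NN NN_def hi)

lemma kor_norm_triangle: "kor_norm (heis_mult p q) \<le> kor_norm p + kor_norm q"
proof -
  obtain x y t where p: "p = (x,y,t)" by (cases p) auto
  obtain x' y' t' where q: "q = (x',y',t')" by (cases q) auto
  define W where "W = (\<lambda>(p::heis). Complex (fst p ^ 2 + fst (snd p) ^ 2) (snd (snd p)))"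
  have cW: "cmod (W s) = sqrt (NN s)" for s
    by (simp add: W_def NN_def cmod_def)
  have eq: "W (heis_mult p q) = W p + W q + 2 * Complex x y * cnj (Complex x' y')"
    by (simp add: W_def p q complex_eq_iff power2_eq_square algebra_simps)
  have z1: "cmod (Complex x y) \<le> kor_norm p"
  proof -
    have "cmod (Complex x y) = sqrt (x^2+y^2)" by (simp add: cmod_def)
    also have "x^2 + y^2 = sqrt ((x^2+y^2)^2)" by simp
    also have "sqrt ((x^2+y^2)^2) \<le> sqrt (NN p)" by (simp add: NN_def p)
    finally show ?thesis by (simp add: kor_norm_sqrt)
  qed
  have z2: "cmod (Complex x' y') \<le> kor_norm q"
  proof -
    have "cmod (Complex x' y') = sqrt (x'^2+y'^2)" by (simp add: cmod_def)
    also have "x'^2 + y'^2 = sqrt ((x'^2+y'^2)^2)" by simp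
    also have "sqrt ((x'^2+y'^2)^2) \<le> sqrt (NN q)" by (simp add: NN_def q)
    finally show ?thesis by (simp add: kor_norm_sqrt)
  qed
  have sp: "sqrt (NN p) = kor_norm p ^ 2" by (simp add: kor_norm_sqrt NN_nonneg)
  have sq: "sqrt (NN q) = kor_norm q ^ 2" by (simp add: kor_norm_sqrt NN_nonneg)
  have "sqrt (NN (heis_mult p q)) \<le> cmod (W p) + cmod (W q) + cmod (2 * Complex x y * cnj (Complex x' y'))"
    using cW eq norm_triangle_ineq order_trans by (metis add_mono_thms_linordered_semiring(3))
  also have "\<dots> = kor_norm p ^ 2 + kor_norm q ^ 2 + 2 * cmod (Complex x y) * cmod (Complex x' y')"
    by (simp add: cW sp sq norm_mult)
  also have "\<dots> \<le> kor_norm p ^ 2 + kor_norm q ^ 2 + 2 * kor_norm p * kor_norm q"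
    using mult_mono[OF z1 z2] by (simp add: kor_norm_nonneg)
  also have "\<dots> = (kor_norm p + kor_norm q)^2" by (simp add: power2_eq_square algebra_simps)
  finally have "sqrt (NN (heis_mult p q)) \<le> (kor_norm p + kor_norm q)^2" .
  then have "sqrt (sqrt (NN (heis_mult p q))) \<le> sqrt ((kor_norm p + kor_norm q)^2)"
    using real_sqrt_le_mono by blast
  thus ?thesis using kor_norm_nonneg[of p] kor_norm_nonneg[of q] by (simp add: kor_norm_sqrt)
qed

lemma NN_scaleR: "NN (c *\<^sub>R p) = c^4 * (fst p ^ 2 + fst (snd p) ^ 2) ^ 2 + c^2 * snd (snd p) ^ 2"
proof -
  have "NN (c *\<^sub>R p) = (c^2 * (fst p ^ 2 + fst (snd p) ^ 2)) ^ 2 + c^2 * snd (snd p) ^ 2"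
    by (simp add: NN_def power_mult_distrib algebra_simps)
  also have "\<dots> = c^4 * (fst p ^ 2 + fst (snd p) ^ 2) ^ 2 + c^2 * snd (snd p) ^ 2"
    by (simp add: power_mult_distrib flip: power_mult)
  finally show ?thesis .
qed

lemma cont_NN: "continuous_on UNIV NN"
  unfolding NN_def by (intro continuous_intros)

lemma frontier_ball: "frontier kor_ball = {p. NN p = 1}"
proof -
  have op: "open kor_ball"
    unfolding kor_ball_def kor_norm_less1
    by (rule open_Collect_less[OF cont_NN continuous_on_const])
  have cl: "closure kor_ball \<subseteq> {p. NN p \<le> 1}"
    by (rule closure_minimal) (auto simp: kor_ball_def kor_norm_less1 intro!: closed_Collect_le[OF cont_NN continuous_on_const])
  have sub: "{p. NN p = 1} \<subseteq> closure kor_ball"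
  proof
    fix p assume "p \<in> {p. NN p = 1}"
    hence p1: "NN p = 1" by simp
    define g where "g = (\<lambda>n::nat. (1 - inverse (real (Suc n))) *\<^sub>R p)"
    have "g \<longlonglongrightarrow> (1 - 0) *\<^sub>R p"
      unfolding g_def by (intro tendsto_intros LIMSEQ_inverse_real_of_nat)
    hence lim: "g \<longlonglongrightarrow> p" by simp
    have "g n \<in> kor_ball" for n
    proof -
      define c where "c = 1 - inverse (real (Suc n))"
      have c0: "0 \<le> c" and c1: "c < 1" by (auto simp: c_def field_simps)
      obtain x y t where pp: "p = (x,y,t)" by (cases p) auto
      have "NN (g n) = c^4 * (x^2+y^2)^2 + c^2 * t^2"
        unfolding g_def c_def[symmetric] NN_scaleR by (simp add: pp)
      also have "\<dots> \<le> c^2 * ((x^2+y^2)^2 + t^2)"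
      proof -
        have "c^4 \<le> c^2" using c0 c1 by (simp add: power_decreasing)
        thus ?thesis by (simp add: algebra_simps mult_right_mono)
      qed
      also have "\<dots> < 1" using p1 c0 c1 by (simp add: NN_def pp power_less_one_iff)
      finally show ?thesis by (simp add: kor_ball_def kor_norm_less1)
    qed
    thus "p \<in> closure kor_ball" using lim by (meson closure_sequential)
  qed
  have "frontier kor_ball = closure kor_ball - kor_ball"
    using op by (simp add: frontier_def interior_open)
  thus ?thesis using cl sub by (auto simp: kor_ball_def kor_norm_less1)
qed

definition S1 :: "heis set" where "S1 = {p. NN p = 1}"

lemma S1_ne: "(1,0,0) \<in> S1" by (simp add: S1_def NN_def)

lemma norm_bound: "NN p \<le> 1 \<Longrightarrow> norm p \<le> 2"
  proof -
    assume that: "NN p \<le> 1"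
    obtain x y t where pp: "p = (x,y,t)" by (cases p) auto
    have e: "(x^2+y^2)^2 + t^2 \<le> 1" using that by (simp add: NN_def pp)
    have a: "x^2+y^2 \<le> 1"
    proof (rule ccontr)
      assume "\<not> ?thesis" hence "1 < x^2+y^2" by simp
      hence "1 < (x^2+y^2)^2" by (simp add: less_1_mult power2_eq_square)
      thus False using e by (smt (verit) zero_le_power2)
    qed
    have b: "t^2 \<le> 1" using e by (smt (verit) zero_le_power2)
    have "norm p = sqrt (x^2 + y^2 + t^2)" by (simp add: pp norm_Pair)
    also have "\<dots> \<le> sqrt 4" using a b by (intro real_sqrt_le_mono) simp
    also have "sqrt 4 = 2" by (simp add: real_sqrt_eq_iff[symmetric] )
    finally show ?thesis .
  qed

lemma S1_compact: "compact S1"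
proof -
  have cl: "closed S1" unfolding S1_def
    by (rule closed_Collect_eq[OF cont_NN continuous_on_const])
  have "norm p \<le> 2" if "p \<in> S1" for p using that norm_bound by (simp add: S1_def)
  hence "bounded S1" unfolding bounded_iff by blast
  thus ?thesis using cl by (simp add: compact_eq_bounded_closed)
qed

definition ff :: "heis \<Rightarrow> real" where "ff q = kor_setdist q S1"

lemma kor_dist_nonneg: "kor_dist p q \<ge> 0" by (simp add: kor_dist_def kor_norm_nonneg)

lemma ff_le: "a \<in> S1 \<Longrightarrow> ff q \<le> kor_dist q a"
  unfolding ff_def kor_setdist_def
  by (rule cINF_lower) (auto intro!: bdd_belowI[of _ 0] simp: kor_dist_nonneg)

lemma ff_ge: "(\<And>a. a \<in> S1 \<Longrightarrow> c \<le> kor_dist q a) \<Longrightarrow> c \<le> ff q"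
  unfolding ff_def kor_setdist_def
  using S1_ne by (intro cINF_greatest) auto

lemma kor_dist_sym: "kor_dist p q = kor_dist q p"
  by (metis kor_dist_def kor_norm_inv heis_inv_mult hi minus_minus)

lemma kor_dist_tri: "kor_dist p a \<le> kor_dist p q + kor_dist q a"
proof -
  have "heis_mult (heis_mult (heis_inv a) q) (heis_mult (heis_inv q) p) = heis_mult (heis_inv a) p"
    by (simp add: heis_assoc heis_inv_right)
  thus ?thesis unfolding kor_dist_def
    by (metis add.commute kor_norm_triangle)
qed

lemma kor_dist_self: "kor_dist p p = 0"
  by (simp add: kor_dist_def hm hi kor_norm_0[unfolded zero_prod_def])

lemma ff_lip: "\<bar>ff p - ff q\<bar> \<le> kor_dist p q"
proof -
  have "ff p \<le> kor_dist p q + ff q"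
  proof -
    have "ff q + kor_dist p q \<ge> ff p"
    proof -
      have "ff q \<ge> ff p - kor_dist p q"
        by (rule ff_ge) (smt (verit) ff_le kor_dist_tri)
      thus ?thesis by simp
    qed
    thus ?thesis by simp
  qed
  moreover have "ff q \<le> kor_dist q p + ff p"
  proof -
    have "ff p \<ge> ff q - kor_dist q p"
      by (rule ff_ge) (smt (verit) ff_le kor_dist_tri)
    thus ?thesis by simp
  qed
  ultimately show ?thesis using kor_dist_sym[of p q] by linarith
qed

lemma cont_dist: "continuous_on UNIV (\<lambda>p. kor_dist p q)"
  unfolding kor_dist_def kor_norm_NN NN_def hm hi
  by (intro continuous_intros)

lemma cont_ff: "continuous_on UNIV ff"
proof -
  have "isCont ff q" for q
  proof -
    have "((\<lambda>p. kor_dist p q) \<longlongrightarrow> kor_dist q q) (at q)"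
      using cont_dist[of q] by (meson UNIV_I continuous_on_eq_continuous_at isCont_def open_UNIV)
    hence t0: "((\<lambda>p. kor_dist p q) \<longlongrightarrow> 0) (at q)" by (simp add: kor_dist_self)
    have "((\<lambda>p. ff p - ff q) \<longlongrightarrow> 0) (at q)"
      by (rule Lim_null_comparison[OF _ t0]) (simp add: ff_lip)
    hence "((\<lambda>p. ff p - ff q + ff q) \<longlongrightarrow> 0 + ff q) (at q)"
      by (intro tendsto_intros)
    thus ?thesis by (simp add: isCont_def)
  qed
  thus ?thesis by (simp add: continuous_on_eq_continuous_at)
qed

lemma ff_attain: "\<exists>a\<in>S1. ff q = kor_dist q a"
proof -
  have "continuous_on S1 (\<lambda>a. kor_dist q a)"
    unfolding kor_dist_def kor_norm_NN NN_def hm hi by (intro continuous_intros)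
  then obtain a where a: "a \<in> S1" "\<And>b. b \<in> S1 \<Longrightarrow> kor_dist q a \<le> kor_dist q b"
    using continuous_attains_inf[OF S1_compact] S1_ne by blast
  have "kor_dist q a \<le> ff q" by (rule ff_ge) (rule a(2))
  thus ?thesis using ff_le[OF a(1), of q] a(1) by (intro bexI[of _ a]) auto
qed

lemma sq_convex: "0 \<le> (u::real) \<Longrightarrow> u \<le> 1 \<Longrightarrow> (u*a + (1-u)*b)^2 \<le> u*a^2 + (1-u)*(b::real)^2"
proof -
  assume u: "0 \<le> u" "u \<le> 1"
  have "u*a^2 + (1-u)*b^2 - (u*a+(1-u)*b)^2 = u*(1-u)*(a-b)^2"
    by algebra
  moreover have "u*(1-u)*(a-b)^2 \<ge> 0" using u by simp
  ultimately show ?thesis by linarith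
qed

lemma NN_convex:
  assumes u: "0 \<le> u" "u \<le> 1"
  shows "NN (u *\<^sub>R p + (1-u) *\<^sub>R q) \<le> u * NN p + (1-u) * NN q"
proof -
  obtain x y t where pp: "p = (x,y,t)" by (cases p) auto
  obtain x' y' t' where qq: "q = (x',y',t')" by (cases q) auto
  define A where "A = x^2+y^2"
  define A' where "A' = x'^2+y'^2"
  define Au where "Au = (u*x+(1-u)*x')^2 + (u*y+(1-u)*y')^2"
  have "Au \<le> u*A + (1-u)*A'"
    unfolding Au_def A_def A'_def using sq_convex[OF u, of x x'] sq_convex[OF u, of y y']
    by (simp add: algebra_simps)
  moreover have "0 \<le> Au" by (simp add: Au_def)
  ultimately have "Au^2 \<le> (u*A + (1-u)*A')^2" by (simp add: power_mono)
  also have "\<dots> \<le> u*A^2 + (1-u)*A'^2" by (rule sq_convex[OF u])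
  finally have 1: "Au^2 \<le> u*A^2 + (1-u)*A'^2" .
  have 2: "(u*t+(1-u)*t')^2 \<le> u*t^2 + (1-u)*t'^2" by (rule sq_convex[OF u])
  have "NN (u *\<^sub>R p + (1-u) *\<^sub>R q) = Au^2 + (u*t+(1-u)*t')^2"
    by (simp add: NN_def pp qq Au_def)
  also have "\<dots> \<le> u * NN p + (1-u) * NN q"
    using 1 2 by (simp add: NN_def pp qq A_def A'_def algebra_simps)
  finally show ?thesis .
qed

lemma heis_mult_affine:
  "heis_mult (u *\<^sub>R p + (1-u) *\<^sub>R q) b = u *\<^sub>R heis_mult p b + (1-u) *\<^sub>R heis_mult q b"
  by (simp add: hm prod_eq_iff algebra_simps)

lemma heis_mult_0: "heis_mult q 0 = q"
  by (simp add: hm prod_eq_iff)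

lemma NN_scale_le: "0 \<le> s \<Longrightarrow> s \<le> 1 \<Longrightarrow> NN (s *\<^sub>R b) \<le> NN b"
proof -
  assume s: "0 \<le> s" "s \<le> 1"
  have a: "s^4 \<le> 1" and c: "s^2 \<le> 1" using s by (auto intro: power_le_one)
  have "s^4 * (fst b ^ 2 + fst (snd b) ^ 2) ^ 2 \<le> (fst b ^ 2 + fst (snd b) ^ 2) ^ 2"
    using a by (simp add: mult_left_le_one_le)
  moreover have "s^2 * snd (snd b) ^ 2 \<le> snd (snd b) ^ 2"
    using c by (simp add: mult_left_le_one_le)
  ultimately show ?thesis unfolding NN_scaleR by (simp add: NN_def)
qed

lemma key:
  assumes q: "NN q < 1" and f: "\<rho> \<le> ff q" and b: "kor_norm b < \<rho>"
  shows "NN (heis_mult q b) < 1"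
proof (rule ccontr)
  assume "\<not> ?thesis"
  hence g1: "1 \<le> NN (heis_mult q b)" by simp
  define g where "g = (\<lambda>s::real. NN (heis_mult q (s *\<^sub>R b)))"
  have cg: "continuous_on {0..1} g" unfolding g_def NN_def hm by (intro continuous_intros)
  have "g 0 \<le> 1" using q by (simp add: g_def heis_mult_0)
  moreover have "1 \<le> g 1" using g1 by (simp add: g_def)
  ultimately obtain s where s: "0 \<le> s" "s \<le> 1" "g s = 1"
    using IVT'[of g 0 1 1, OF _ _ _ cg] by auto
  define a where "a = heis_mult q (s *\<^sub>R b)"
  have aS: "a \<in> S1" using s by (simp add: S1_def a_def g_def)
  have "heis_mult (heis_inv a) q = heis_inv (s *\<^sub>R b)"
    by (simp add: a_def hm hi prod_eq_iff algebra_simps)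
  hence "kor_dist q a = kor_norm (s *\<^sub>R b)" by (simp add: kor_dist_def kor_norm_inv)
  also have "\<dots> \<le> kor_norm b" using NN_scale_le[OF s(1,2)] by (simp add: kor_norm_le)
  finally have "kor_dist q a < \<rho>" using b by simp
  thus False using ff_le[OF aS, of q] f by simp
qed

theorem proposition6p7:
  fixes r :: real
  assumes "0 < r" and "r < 1"
  shows "Sigma_r r homeomorphic sphere (0 :: real \<times> real \<times> real) 1"
proof -
  define \<rho> where "\<rho> = 1 - r"
  have rho0: "0 < \<rho>" and rho1: "\<rho> < 1" using assms by (auto simp: \<rho>_def)
  define C where "C = {q. NN q \<le> 1 \<and> \<rho> \<le> ff q}"
  have Clt: "NN q < 1" if "q \<in> C" for q
  proof (rule ccontr)
    assume "\<not> NN q < 1"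
    hence "q \<in> S1" using that by (simp add: C_def S1_def)
    hence "ff q \<le> 0" using ff_le[of q q] by (simp add: kor_dist_self)
    thus False using that rho0 by (simp add: C_def)
  qed
  have convC: "convex C"
  proof (rule convexI)
    fix p q :: heis and u v :: real
    assume p: "p \<in> C" and q: "q \<in> C" and u: "0 \<le> u" "0 \<le> v" "u + v = 1"
    have v: "v = 1 - u" using u by simp
    have u1: "u \<le> 1" using u by simp
    define m where "m = u *\<^sub>R p + (1-u) *\<^sub>R q"
    have "NN m \<le> u * NN p + (1-u) * NN q" unfolding m_def by (rule NN_convex[OF u(1) u1])
    also have "\<dots> \<le> u * 1 + (1-u) * 1"
      using p q u u1 by (intro add_mono mult_left_mono) (auto simp: C_def)
    finally have m1: "NN m \<le> 1" by simp
    have "\<rho> \<le> ff m"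
    proof (rule ff_ge, rule ccontr)
      fix a assume aS: "a \<in> S1" and "\<not> \<rho> \<le> kor_dist m a"
      hence lt: "kor_dist m a < \<rho>" by simp
      define b where "b = heis_mult (heis_inv m) a"
      have bn: "kor_norm b < \<rho>" using lt kor_dist_sym[of m a] by (simp add: b_def kor_dist_def)
      have mb: "heis_mult m b = a" by (simp add: b_def heis_inv_right)
      have 1: "NN (heis_mult p b) < 1" using key[OF Clt[OF p] _ bn] p by (simp add: C_def)
      have 2: "NN (heis_mult q b) < 1" using key[OF Clt[OF q] _ bn] q by (simp add: C_def)
      have "NN a = NN (u *\<^sub>R heis_mult p b + (1-u) *\<^sub>R heis_mult q b)"
        by (simp add: mb[symmetric] m_def heis_mult_affine)
      also have "\<dots> \<le> u * NN (heis_mult p b) + (1-u) * NN (heis_mult q b)"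
        by (rule NN_convex[OF u(1) u1])
      also have "\<dots> < 1"
      proof (cases "u = 0")
        case True thus ?thesis using 2 by simp
      next
        case False
        hence "u * NN (heis_mult p b) < u * 1" using 1 u by simp
        moreover have "(1-u) * NN (heis_mult q b) \<le> (1-u) * 1" using 2 u1 by (intro mult_left_mono) auto
        ultimately show ?thesis by simp
      qed
      finally show False using aS by (simp add: S1_def)
    qed
    thus "u *\<^sub>R p + v *\<^sub>R q \<in> C" using m1 by (simp add: C_def m_def v)
  qed
  have closedC: "closed C" unfolding C_def
    by (intro closed_Collect_conj closed_Collect_le cont_NN cont_ff continuous_on_const)
  have boundedC: "bounded C" unfolding bounded_iff C_def using norm_bound by blast
  define U where "U = {q. NN q < 1 \<and> \<rho> < ff q}"
  have openU: "open U" unfolding U_def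
    by (intro open_Collect_conj open_Collect_less cont_NN cont_ff continuous_on_const)
  have UC: "U \<subseteq> C" by (auto simp: U_def C_def)
  have "1 \<le> ff 0"
  proof (rule ff_ge)
    fix a assume "a \<in> S1"
    thus "1 \<le> kor_dist 0 a"
      by (simp add: kor_dist_def heis_mult_0[unfolded zero_prod_def] kor_norm_inv S1_def kor_norm_eq1[symmetric] zero_prod_def)
  qed
  hence "0 \<in> U" using rho1 by (simp add: U_def NN_def)
  hence intC: "interior C \<noteq> {}" using interior_maximal[OF UC openU] by blast
  have Sig: "Sigma_r r = {q. NN q < 1 \<and> ff q = \<rho>}"
    unfolding Sigma_r_def frontier_ball S1_def[symmetric] ff_def[symmetric] \<rho>_def
    unfolding kor_ball_def kor_norm_less1
    by simp
  have frC: "frontier C = C - interior C"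
    using closedC by (simp add: frontier_def closure_closed)
  have "Sigma_r r = frontier C"
  proof
    show "Sigma_r r \<subseteq> frontier C"
    proof
      fix q assume "q \<in> Sigma_r r"
      hence q1: "NN q < 1" and fq: "ff q = \<rho>" by (auto simp: Sig)
      have qC: "q \<in> C" using q1 fq by (simp add: C_def)
      have "q \<notin> interior C"
      proof
        assume "q \<in> interior C"
        then obtain e where e: "e > 0" "ball q e \<subseteq> C" using mem_interior by blast
        obtain a where aS: "a \<in> S1" and fa: "ff q = kor_dist q a" using ff_attain by blast
        define b where "b = heis_mult (heis_inv q) a"
        have qb: "heis_mult q b = a" by (simp add: b_def heis_inv_right)
        have nb: "kor_norm b = \<rho>" using fa fq kor_dist_sym[of q a] by (simp add: b_def kor_dist_def)
        have NNb: "NN b > 0"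
        proof -
          have "kor_norm 0 < kor_norm b" using nb rho0 by (simp add: kor_norm_0)
          thus ?thesis by (simp add: kor_norm_less NN_def)
        qed
        have "continuous (at 0) (\<lambda>s::real. heis_mult q (s *\<^sub>R b))"
          unfolding hm by (intro continuous_intros)
        then obtain d where d: "d > 0" "\<And>s. dist s 0 < d \<Longrightarrow> dist (heis_mult q (s *\<^sub>R b)) (heis_mult q (0 *\<^sub>R b)) < e"
          using e(1) unfolding continuous_at_eps_delta by blast
        define s where "s = min (d/2) (1/2)"
        have s: "0 < s" "s < 1" "dist s 0 < d" using d by (auto simp: s_def)
        have "dist (heis_mult q (s *\<^sub>R b)) q < e" using d(2)[OF s(3)] by (simp add: heis_mult_0)
        hence inC: "heis_mult q (s *\<^sub>R b) \<in> C" using e(2) by (auto simp: dist_commute)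
        have "heis_mult (heis_inv a) (heis_mult q (s *\<^sub>R b)) = (s - 1) *\<^sub>R b"
          by (simp add: qb[symmetric] hm hi prod_eq_iff algebra_simps)
        hence "kor_dist (heis_mult q (s *\<^sub>R b)) a = kor_norm ((s - 1) *\<^sub>R b)"
          by (simp add: kor_dist_def)
        also have "\<dots> < kor_norm b"
        proof -
          define c where "c = 1 - s"
          have c: "0 < c" "c < 1" using s by (auto simp: c_def)
          have "NN ((s - 1) *\<^sub>R b) = c^4 * (fst b ^ 2 + fst (snd b) ^ 2) ^ 2 + c^2 * snd (snd b) ^ 2"
            unfolding NN_scaleR c_def by (simp add: power2_eq_square power4_eq_xxxx algebra_simps)
          also have "\<dots> \<le> c^2 * NN b"
          proof -
            have "c^4 \<le> c^2" using c by (simp add: power_decreasing)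
            hence "c^4 * (fst b ^ 2 + fst (snd b) ^ 2) ^ 2 \<le> c^2 * (fst b ^ 2 + fst (snd b) ^ 2) ^ 2"
              by (simp add: mult_right_mono)
            thus ?thesis by (simp add: NN_def algebra_simps)
          qed
          also have "\<dots> < NN b" using NNb c by (simp add: power_less_one_iff)
          finally show ?thesis by (simp add: kor_norm_less)
        qed
        finally have "ff (heis_mult q (s *\<^sub>R b)) < \<rho>"
          using ff_le[OF aS, of "heis_mult q (s *\<^sub>R b)"] nb by simp
        thus False using inC by (simp add: C_def)
      qed
      thus "q \<in> frontier C" using qC frC by simp
    qed
  next
    show "frontier C \<subseteq> Sigma_r r"
    proof
      fix q assume "q \<in> frontier C"
      hence qC: "q \<in> C" and qi: "q \<notin> interior C" using frC by auto
      have q1: "NN q < 1" using Clt[OF qC] .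
      have "\<not> \<rho> < ff q"
      proof
        assume "\<rho> < ff q"
        hence "q \<in> U" using q1 by (simp add: U_def)
        thus False using qi interior_maximal[OF UC openU] by blast
      qed
      hence "ff q = \<rho>" using qC by (simp add: C_def)
      thus "q \<in> Sigma_r r" using q1 by (simp add: Sig)
    qed
  qed
  also have "\<dots> = rel_frontier C" using rel_frontier_nonempty_interior[OF intC] by simp
  also have "rel_frontier C homeomorphic rel_frontier (cball (0::heis) 1)"
  proof (rule homeomorphic_rel_frontiers_convex_bounded_sets[OF convC boundedC])
    show "aff_dim C = aff_dim (cball (0::heis) 1)"
      using aff_dim_nonempty_interior[OF intC] aff_dim_cball[of 1 "0::heis"] by simp
  qed simp_all
  also have "rel_frontier (cball (0::heis) 1) = sphere 0 1" by simp
  finally show ?thesis .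
qed

end
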